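(* Let $\lambda,\sigma\in\mathbb{R}$, $x_0\ne0$, and let $B$ be a standard scalar Brownian motion. For $0<\Delta t<1$ let $t_n=n\Delta t$, $\Delta B_n=B(t_{n+1})-B(t_n)$, and let $\{X_n\}$ be the Milstein scheme for $dX=\lambda X\,dt+\sigma X\,dB$, $X(0)=x_0$, namely $X_0=x_0$ and $$X_n=X_{n-1}\Big[1+\lambda\Delta t+\sigma\Delta B_{n-1}+\tfrac{\sigma^2}{2}(\Delta B_{n-1}^2-\Delta t)\Big],\quad n\ge1.$$ Then there exist $0<\Delta t_2<1$ and $C_3,C_4>0$ such that for all $0<\Delta t<\Delta t_2$, $$\lambda+\tfrac{\sigma^2}{2}-C_3\Delta t\le\limsup_{n\to\infty}\frac1{t_n}\log\big[\mathbb E|X_n|^2\big]^{1/2}\le\lambda+\tfrac{\sigma^2}{2}+C_3\Delta t,$$ and almost surely $$\lambda-\tfrac{\sigma^2}{2}-C_4\Delta t^{1/2}\le\limsup_{n\to\infty}\frac1{t_n}\log|X_n|\le\lambda-\tfrac{\sigma^2}{2}+C_4\Delta t^{1/2}.$$ Consequently, for $0<\Delta t<\Delta t_2$: (a) if $\lambda+\frac{\sigma^2}{2}<0$ (resp. $>0$) then $X_n$ is mean-square exponentially stable (resp. mean-square exponentially blowing up); (b) if $\lambda-\frac{\sigma^2}{2}<0$ (resp. $>0$) then $X_n$ is almost-surely exponentially stable (resp. almost-surely exponentially blowing up).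
   Context: Terminology: $X_n$ is mean-square exponentially stable if there exist $C,\alpha>0$ with $[\mathbb E|X_n|^2]^{1/2}\le Ce^{-\alpha t_n}$ for all large $n$, and mean-square exponentially blowing up if there exist $C,\beta>0$ with $[\mathbb E|X_n|^2]^{1/2}\ge Ce^{\beta t_n}$ for all large $n$; almost-surely exponentially stable (resp. blowing up) means that almost surely $|X_n|\le Ce^{-\alpha t_n}$ (resp. $|X_n|\ge Ce^{\beta t_n}$) for all large $n$, for some $\alpha>0$ (resp. $\beta>0$) and a (possibly random) $C>0$. Constants may depend on $\lambda,\sigma$. *)

theory Defs
  imports "HOL-Probability.Probability"
begin

definition std_brownian_motion :: "'a measure \<Rightarrow> (real \<Rightarrow> 'a \<Rightarrow> real) \<Rightarrow> bool" where
  "std_brownian_motion M B \<longleftrightarrow>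
     prob_space M \<and>
     (\<forall>t\<ge>0. B t \<in> borel_measurable M) \<and>
     (AE \<omega> in M. B 0 \<omega> = 0) \<and>
     (AE \<omega> in M. continuous_on {0..} (\<lambda>t. B t \<omega>)) \<and>
     (\<forall>s t. 0 \<le> s \<and> s < t \<longrightarrow>
        distributed M lborel (\<lambda>\<omega>. B t \<omega> - B s \<omega>) (normal_density 0 (sqrt (t - s)))) \<and>
     (\<forall>(ts :: nat \<Rightarrow> real) n. 0 \<le> ts 0 \<and> (\<forall>i<n. ts i < ts (Suc i)) \<longrightarrow>
        prob_space.indep_vars M (\<lambda>_. borel) (\<lambda>i \<omega>. B (ts (Suc i)) \<omega> - B (ts i) \<omega>) {..<n})"

fun milstein :: "real \<Rightarrow> real \<Rightarrow> real \<Rightarrow> (real \<Rightarrow> 'a \<Rightarrow> real) \<Rightarrow> real \<Rightarrow> nat \<Rightarrow> 'a \<Rightarrow> real" where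
  "milstein lam sig x0 B dt 0 \<omega> = x0"
| "milstein lam sig x0 B dt (Suc n) \<omega> =
     (let dB = B (real (Suc n) * dt) \<omega> - B (real n * dt) \<omega> in
      milstein lam sig x0 B dt n \<omega> *
        (1 + lam * dt + sig * dB + sig\<^sup>2 / 2 * (dB\<^sup>2 - dt)))"

definition ms_exp_stable :: "'a measure \<Rightarrow> (nat \<Rightarrow> 'a \<Rightarrow> real) \<Rightarrow> real \<Rightarrow> bool" where
  "ms_exp_stable M X dt \<longleftrightarrow> (\<exists>C \<alpha>. C > 0 \<and> \<alpha> > 0 \<and>
     (\<forall>\<^sub>F n in sequentially. sqrt (integral\<^sup>L M (\<lambda>\<omega>. \<bar>X n \<omega>\<bar>\<^sup>2)) \<le> C * exp (- \<alpha> * (real n * dt))))"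

definition ms_exp_blowup :: "'a measure \<Rightarrow> (nat \<Rightarrow> 'a \<Rightarrow> real) \<Rightarrow> real \<Rightarrow> bool" where
  "ms_exp_blowup M X dt \<longleftrightarrow> (\<exists>C \<beta>. C > 0 \<and> \<beta> > 0 \<and>
     (\<forall>\<^sub>F n in sequentially. sqrt (integral\<^sup>L M (\<lambda>\<omega>. \<bar>X n \<omega>\<bar>\<^sup>2)) \<ge> C * exp (\<beta> * (real n * dt))))"

definition as_exp_stable :: "'a measure \<Rightarrow> (nat \<Rightarrow> 'a \<Rightarrow> real) \<Rightarrow> real \<Rightarrow> bool" where
  "as_exp_stable M X dt \<longleftrightarrow> (\<exists>\<alpha>>0. AE \<omega> in M. \<exists>C>0.
     (\<forall>\<^sub>F n in sequentially. \<bar>X n \<omega>\<bar> \<le> C * exp (- \<alpha> * (real n * dt))))"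

definition as_exp_blowup :: "'a measure \<Rightarrow> (nat \<Rightarrow> 'a \<Rightarrow> real) \<Rightarrow> real \<Rightarrow> bool" where
  "as_exp_blowup M X dt \<longleftrightarrow> (\<exists>\<beta>>0. AE \<omega> in M. \<exists>C>0.
     (\<forall>\<^sub>F n in sequentially. \<bar>X n \<omega>\<bar> \<ge> C * exp (\<beta> * (real n * dt))))"

end

theory Submission
  imports Defs "HOL-Probability.Probability"
begin

lemma exp_ln_taylor:
  fixes x p :: real
  assumes x: "x \<ge> 1/4" and p: "\<bar>p\<bar> \<le> 1"
  shows "exp (p * ln x) \<le> 1 + p*(x-1) + p*(p-1)/2*(x-1)^2 + 256*\<bar>p\<bar>*\<bar>x-1\<bar>^3"
proof (cases "x = 1")
  case True then show ?thesis by simp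
next
  case False
  define diff where "diff = (\<lambda>m::nat. \<lambda>y::real. (\<Prod>j<m. (p - real j)) * exp ((p - real m) * ln y))"
  have D: "\<forall>m t. m < 3 \<and> 1/4 \<le> t \<and> t \<le> max x 1 \<longrightarrow> DERIV (diff m) t :> diff (Suc m) t"
  proof (intro allI impI)
    fix m :: nat and t :: real assume "m < 3 \<and> 1/4 \<le> t \<and> t \<le> max x 1"
    then have t: "t > 0" by auto
    have d: "DERIV (diff m) t :>
        (\<Prod>j<m. (p - real j)) * (exp ((p - real m) * ln t) * ((p - real m) * (1/t)))"
      unfolding diff_def by (intro derivative_eq_intros) (use t in auto)
    have ee: "exp ((p - real m) * ln t) * (1/t) = exp ((p - real (Suc m)) * ln t)"
      using t by (simp add: algebra_simps exp_diff exp_add)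
    have e: "(\<Prod>j<m. (p - real j)) * (exp ((p - real m) * ln t) * ((p - real m) * (1/t))) = diff (Suc m) t"
      unfolding diff_def prod.lessThan_Suc ee[symmetric] by (simp add: algebra_simps)
    from d show "DERIV (diff m) t :> diff (Suc m) t" by (simp only: e)
  qed
  have "diff 0 = (\<lambda>y. exp (p * ln y))" by (simp add: diff_def)
  from Taylor[OF _ this D, of 1 x] False x
  obtain t where t: "(if x < 1 then x < t \<and> t < 1 else 1 < t \<and> t < x)"
    and eq: "exp (p * ln x) = (\<Sum>m<3. diff m 1 / fact m * (x - 1) ^ m) + diff 3 t / fact 3 * (x - 1) ^ 3"
    by auto
  have t4: "t \<ge> 1/4" using t x by (auto split: if_splits)
  have sum: "(\<Sum>m<3. diff m 1 / fact m * (x - 1) ^ m) = 1 + p*(x-1) + p*(p-1)/2*(x-1)^2"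
    by (simp add: diff_def numeral_3_eq_3 lessThan_Suc power2_eq_square)
  have d3: "diff 3 t = p*(p-1)*(p-2) * exp ((p - 3) * ln t)"
    by (simp add: diff_def numeral_3_eq_3 lessThan_Suc power2_eq_square)
  have P6: "\<bar>p*(p-1)*(p-2)\<bar> \<le> \<bar>p\<bar> * 6"
  proof -
    have a: "0 \<le> (p-1)*(p-2)" using p by (intro mult_nonpos_nonpos) auto
    have "p^2 \<le> 1" using p by (simp add: abs_square_le_1)
    then have b: "(p-1)*(p-2) \<le> 6" using p by (simp add: algebra_simps power2_eq_square)
    have "\<bar>p*(p-1)*(p-2)\<bar> = \<bar>p\<bar> * ((p-1)*(p-2))" using a by (metis abs_mult abs_of_nonneg mult.assoc)
    also have "\<dots> \<le> \<bar>p\<bar> * 6" using b by (intro mult_left_mono) auto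
    finally show ?thesis .
  qed
  have E256: "exp ((p - 3) * ln t) \<le> 256"
  proof -
    have "ln t \<ge> ln (1/4)" using t4 by simp
    then have lt: "ln t \<ge> - ln 4" by (simp add: ln_div)
    have l4: "ln (4::real) \<ge> 0" by simp
    have "(p - 3) * ln t \<le> (p-3) * (- ln 4)"
      using lt p by (intro mult_left_mono_neg) auto
    also have "\<dots> = (3 - p) * ln 4" by (simp add: algebra_simps)
    also have "\<dots> \<le> 4 * ln 4" using p l4 by (intro mult_right_mono) auto
    also have "\<dots> = ln 256" using ln_realpow[of 4 4] by simp
    finally have h: "(p - 3) * ln t \<le> ln 256" .
    have "exp ((p-3)*ln t) \<le> exp (ln (256::real))" using h by (simp only: exp_le_cancel_iff)
    also have "exp (ln (256::real)) = 256" by simp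
    finally show ?thesis .
  qed
  have "\<bar>diff 3 t / fact 3 * (x - 1) ^ 3\<bar> = \<bar>p*(p-1)*(p-2)\<bar> * exp ((p - 3) * ln t) / 6 * \<bar>x-1\<bar>^3"
    unfolding d3 by (simp add: abs_mult power_abs fact_numeral)
  also have "\<dots> \<le> (\<bar>p\<bar> * 6) * 256 / 6 * \<bar>x-1\<bar>^3"
    by (intro mult_right_mono divide_right_mono mult_mono P6 E256) auto
  finally have "\<bar>diff 3 t / fact 3 * (x - 1) ^ 3\<bar> \<le> 256*\<bar>p\<bar>*\<bar>x-1\<bar>^3" by simp
  then show ?thesis using eq sum by linarith
qed

lemma normal_moment_hb:
  assumes "prob_space M" and D: "distributed M lborel Y (normal_density 0 sd)" and sd: "sd > 0"
  shows "has_bochner_integral M (\<lambda>\<omega>. Y \<omega> ^ k)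
           (if even k then fact k / ((2 / sd\<^sup>2) ^ (k div 2) * fact (k div 2)) else 0)"
proof -
  have int: "integrable lborel (\<lambda>x. normal_density 0 sd x * x ^ k)"
    using integrable_normal_moment[of sd 0 k] sd by simp
  have "integrable M (\<lambda>\<omega>. Y \<omega> ^ k)"
    using distributed_integrable[OF D, of "\<lambda>x. x ^ k"] int by simp
  moreover have "(\<integral>\<omega>. Y \<omega> ^ k \<partial>M) = (\<integral>x. normal_density 0 sd x * x ^ k \<partial>lborel)"
    using distributed_integral[OF D, of "\<lambda>x. x ^ k"] by simp
  moreover have "(\<integral>x. normal_density 0 sd x * x ^ k \<partial>lborel) =
     (if even k then fact k / ((2 / sd\<^sup>2) ^ (k div 2) * fact (k div 2)) else 0)"
  proof (cases "even k")
    case True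
    then obtain j where k: "k = 2 * j" by auto
    show ?thesis using integral_normal_moment_even[OF sd, of 0 j] k by simp
  next
    case False
    then obtain j where k: "k = 2 * j + 1" using oddE by blast
    show ?thesis using integral_normal_moment_odd[OF sd, of 0 j] k by simp
  qed
  ultimately show ?thesis by (simp add: has_bochner_integral_iff)
qed

locale milsetup =
  fixes M :: "'a measure" and B :: "real \<Rightarrow> 'a \<Rightarrow> real" and lam sig dt :: real
  assumes BM: "std_brownian_motion M B" and dt0: "0 < dt" and dt1: "dt < 1"
begin

definition Y :: "nat \<Rightarrow> 'a \<Rightarrow> real" where
  "Y i \<omega> = B (real (Suc i) * dt) \<omega> - B (real i * dt) \<omega>"

definition g :: "real \<Rightarrow> real" where
  "g y = 1 + lam * dt + sig * y + sig\<^sup>2 / 2 * (y\<^sup>2 - dt)"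

lemma PS: "prob_space M" using BM by (simp add: std_brownian_motion_def)

sublocale prob_space M by (rule PS)

lemma distY: "distributed M lborel (Y i) (normal_density 0 (sqrt dt))"
proof -
  have all: "\<forall>s t. 0 \<le> s \<and> s < t \<longrightarrow>
        distributed M lborel (\<lambda>\<omega>. B t \<omega> - B s \<omega>) (normal_density 0 (sqrt (t - s)))"
    using BM unfolding std_brownian_motion_def by blast
  have "distributed M lborel (\<lambda>\<omega>. B (real (Suc i) * dt) \<omega> - B (real i * dt) \<omega>)
          (normal_density 0 (sqrt (real (Suc i) * dt - real i * dt)))"
    using all[rule_format, of "real i * dt" "real (Suc i) * dt"] dt0 by (simp add: algebra_simps)
  moreover have "real (Suc i) * dt - real i * dt = dt" by (simp add: algebra_simps)
  ultimately show ?thesis unfolding Y_def[abs_def] by simp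
qed

lemma measY[measurable]: "Y i \<in> borel_measurable M"
  using distY[of i] by (auto dest: distributed_measurable)

lemma indepY: "indep_vars (\<lambda>_. borel) Y {..<n}"
proof -
  have "indep_vars (\<lambda>_. borel) (\<lambda>i \<omega>. B ((\<lambda>i. real i * dt) (Suc i)) \<omega> - B ((\<lambda>i. real i * dt) i) \<omega>) {..<n}"
    using BM dt0 unfolding std_brownian_motion_def
    apply (elim conjE)
    apply (drule spec[of _ "\<lambda>i. real i * dt"])
    by (auto simp: algebra_simps)
  then show ?thesis unfolding Y_def[abs_def] by simp
qed

lemma momY: "has_bochner_integral M (\<lambda>\<omega>. Y i \<omega> ^ k)
           (if even k then fact k / ((2 / dt) ^ (k div 2) * fact (k div 2)) else 0)"
proof -
  have "(sqrt dt)^2 = dt" using dt0 by simp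
  then show ?thesis using normal_moment_hb[OF PS distY[of i], where k=k] dt0 by (simp only: real_sqrt_gt_zero)
qed

lemma mom0: "has_bochner_integral M (\<lambda>\<omega>. Y i \<omega> ^ 0) 1" using momY[of i 0] by simp
lemma mom1: "has_bochner_integral M (\<lambda>\<omega>. Y i \<omega> ^ 1) 0" using momY[of i 1] by simp
lemma mom2: "has_bochner_integral M (\<lambda>\<omega>. Y i \<omega> ^ 2) dt" using momY[of i 2] dt0 by simp
lemma mom3: "has_bochner_integral M (\<lambda>\<omega>. Y i \<omega> ^ 3) 0" using momY[of i 3] by simp
lemma mom4: "has_bochner_integral M (\<lambda>\<omega>. Y i \<omega> ^ 4) (3 * dt^2)"
  using momY[of i 4] dt0 by (simp add: fact_numeral power2_eq_square field_simps)
lemma mom8: "has_bochner_integral M (\<lambda>\<omega>. Y i \<omega> ^ 8) (105 * dt^4)"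
  using momY[of i 8] dt0 by (simp add: fact_numeral field_simps)

lemma quad1: "has_bochner_integral M (\<lambda>\<omega>. a + b * Y i \<omega> + c * Y i \<omega>^2) (a + c * dt)"
proof -
  have "has_bochner_integral M (\<lambda>\<omega>. a * Y i \<omega>^0 + b * Y i \<omega>^1 + c * Y i \<omega>^2) (a * 1 + b * 0 + c * dt)"
    by (intro has_bochner_integral_add has_bochner_integral_mult_right mom0 mom1 mom2)
  then show ?thesis by simp
qed

lemma quad2: "has_bochner_integral M (\<lambda>\<omega>. (a + b * Y i \<omega> + c * Y i \<omega>^2)^2)
   (a^2 + (b^2 + 2*a*c) * dt + 3 * c^2 * dt^2)"
proof -
  have "has_bochner_integral M (\<lambda>\<omega>. a^2 * Y i \<omega>^0 + (2*a*b) * Y i \<omega>^1 + (b^2 + 2*a*c) * Y i \<omega>^2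
       + (2*b*c) * Y i \<omega>^3 + c^2 * Y i \<omega>^4) (a^2 * 1 + (2*a*b) * 0 + (b^2 + 2*a*c) * dt + (2*b*c) * 0 + c^2 * (3*dt^2))"
    by (intro has_bochner_integral_add has_bochner_integral_mult_right mom0 mom1 mom2 mom3 mom4)
  moreover have "(\<lambda>\<omega>. a^2 * Y i \<omega>^0 + (2*a*b) * Y i \<omega>^1 + (b^2 + 2*a*c) * Y i \<omega>^2
       + (2*b*c) * Y i \<omega>^3 + c^2 * Y i \<omega>^4) = (\<lambda>\<omega>. (a + b * Y i \<omega> + c * Y i \<omega>^2)^2)"
    by (rule ext) (simp add: power2_eq_square power3_eq_cube power4_eq_xxxx algebra_simps)
  ultimately show ?thesis by (simp add: algebra_simps)
qed

end

context milsetup begin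

lemma g_quad: "g y = (1 + lam*dt - sig\<^sup>2*dt/2) + sig * y + (sig\<^sup>2/2) * y\<^sup>2"
  unfolding g_def power2_eq_square by (simp add: field_simps)

lemma g_sq_form: "g y = (sig * y + 1)\<^sup>2 / 2 + (1/2 + lam*dt - sig\<^sup>2*dt/2)"
  unfolding g_def power2_eq_square by (simp add: field_simps)

lemma milstein_prod: "milstein lam sig x0 B dt n \<omega> = x0 * (\<Prod>i<n. g (Y i \<omega>))"
  by (induction n) (simp_all add: Let_def g_def Y_def)

lemma measg[measurable]: "g \<in> borel_measurable borel"
  unfolding g_def by measurable

definition mval :: real where "mval = (1 + lam*dt)\<^sup>2 + sig\<^sup>2*dt + sig^4*dt\<^sup>2/2"

lemma Eg2: "has_bochner_integral M (\<lambda>\<omega>. (g (Y i \<omega>))\<^sup>2) mval"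
proof -
  have "has_bochner_integral M (\<lambda>\<omega>. ((1 + lam*dt - sig\<^sup>2*dt/2) + sig * Y i \<omega> + (sig\<^sup>2/2) * Y i \<omega>^2)^2)
     ((1 + lam*dt - sig\<^sup>2*dt/2)^2 + (sig^2 + 2*(1 + lam*dt - sig\<^sup>2*dt/2)*(sig\<^sup>2/2)) * dt + 3 * (sig\<^sup>2/2)^2 * dt^2)"
    by (rule quad2)
  moreover have "(1 + lam*dt - sig\<^sup>2*dt/2)^2 + (sig^2 + 2*(1 + lam*dt - sig\<^sup>2*dt/2)*(sig\<^sup>2/2)) * dt + 3 * (sig\<^sup>2/2)^2 * dt^2 = mval"
    unfolding mval_def by (simp add: power2_eq_square power4_eq_xxxx algebra_simps)
  ultimately show ?thesis unfolding g_quad by simp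
qed

lemma ms_formula: "(\<integral>\<omega>. \<bar>milstein lam sig x0 B dt n \<omega>\<bar>\<^sup>2 \<partial>M) = x0\<^sup>2 * mval ^ n"
proof -
  have "(\<lambda>\<omega>. \<bar>milstein lam sig x0 B dt n \<omega>\<bar>\<^sup>2) = (\<lambda>\<omega>. x0\<^sup>2 * (\<Prod>i<n. (g (Y i \<omega>))\<^sup>2))"
    by (simp add: milstein_prod power_mult_distrib prod_power_distrib)
  then have "(\<integral>\<omega>. \<bar>milstein lam sig x0 B dt n \<omega>\<bar>\<^sup>2 \<partial>M) = x0\<^sup>2 * (\<integral>\<omega>. (\<Prod>i<n. (g (Y i \<omega>))\<^sup>2) \<partial>M)"
    by simp
  also have "(\<integral>\<omega>. (\<Prod>i<n. (g (Y i \<omega>))\<^sup>2) \<partial>M) = (\<Prod>i<n. (\<integral>\<omega>. (g (Y i \<omega>))\<^sup>2 \<partial>M))"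
  proof (rule indep_vars_lebesgue_integral)
    show "indep_vars (\<lambda>_. borel) (\<lambda>i \<omega>. (g (Y i \<omega>))\<^sup>2) {..<n}"
      by (rule indep_vars_compose2[OF indepY, where Y="\<lambda>i y. (g y)\<^sup>2"]) simp
    show "\<And>i. i \<in> {..<n} \<Longrightarrow> integrable M (\<lambda>\<omega>. (g (Y i \<omega>))\<^sup>2)"
      using Eg2 by (auto simp: has_bochner_integral_iff)
  qed simp
  also have "\<dots> = mval ^ n"
    using Eg2 by (simp add: has_bochner_integral_iff)
  finally show ?thesis .
qed

end

context milsetup begin

definition S :: "nat \<Rightarrow> 'a \<Rightarrow> real" where
  "S n \<omega> = (\<Sum>i<n. ln (g (Y i \<omega>)))"

lemma measS[measurable]: "S n \<in> borel_measurable M"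
  unfolding S_def by measurable

lemma chernoff:
  fixes p c :: real
  assumes int: "\<And>i. integrable M (\<lambda>\<omega>. exp (p * ln (g (Y i \<omega>))))"
    and bnd: "\<And>i. (\<integral>\<omega>. exp (p * ln (g (Y i \<omega>))) \<partial>M) \<le> exp (p * dt * c - dt\<^sup>2)"
  shows "AE \<omega> in M. eventually (\<lambda>n. p * S n \<omega> < p * (real n * dt * c)) sequentially"
proof -
  define A where "A n = {\<omega> \<in> space M. exp (p * (real n * dt * c)) \<le> exp (p * S n \<omega>)}" for n
  have Asets[measurable]: "A n \<in> sets M" for n unfolding A_def by measurable
  have Z: "exp (p * S n \<omega>) = (\<Prod>i<n. exp (p * ln (g (Y i \<omega>))))" for n \<omega>
    unfolding S_def by (simp add: sum_distrib_left exp_sum)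
  have EZ: "(\<integral>\<omega>. exp (p * S n \<omega>) \<partial>M) \<le> exp (p * dt * c - dt\<^sup>2) ^ n" for n
  proof -
    have "(\<integral>\<omega>. exp (p * S n \<omega>) \<partial>M) = (\<Prod>i<n. (\<integral>\<omega>. exp (p * ln (g (Y i \<omega>))) \<partial>M))"
      unfolding Z
    proof (rule indep_vars_lebesgue_integral)
      show "indep_vars (\<lambda>_. borel) (\<lambda>i \<omega>. exp (p * ln (g (Y i \<omega>)))) {..<n}"
        by (rule indep_vars_compose2[OF indepY, where Y="\<lambda>i y. exp (p * ln (g y))"]) simp
    qed (use int in auto)
    also have "\<dots> \<le> (\<Prod>i<n. exp (p * dt * c - dt\<^sup>2))"
      by (intro prod_mono conjI integral_nonneg_AE bnd) auto
    finally show ?thesis by simp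
  qed
  have intZ: "integrable M (\<lambda>\<omega>. exp (p * S n \<omega>))" for n
    unfolding Z
    by (rule indep_vars_integrable[OF _ indep_vars_compose2[OF indepY, where Y="\<lambda>i y. exp (p * ln (g y))"]])
       (use int in auto)
  have mA: "measure M (A n) \<le> exp (- dt\<^sup>2) ^ n" for n
  proof -
    have "measure M (A n) \<le> (\<integral>\<omega>. exp (p * S n \<omega>) \<partial>M) / exp (p * (real n * dt * c))"
      unfolding A_def by (rule integral_Markov_inequality_measure[OF intZ]) auto
    also have "\<dots> \<le> exp (p * dt * c - dt\<^sup>2) ^ n / exp (p * (real n * dt * c))"
      by (intro divide_right_mono EZ) auto
    also have "\<dots> = exp (- dt\<^sup>2) ^ n"
      by (simp add: exp_of_nat_mult[symmetric] exp_diff[symmetric] algebra_simps)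
    finally show ?thesis .
  qed
  have summ: "summable (\<lambda>n. measure M (A n))"
  proof (rule summable_comparison_test[OF _ summable_geometric])
    show "\<exists>N. \<forall>n\<ge>N. norm (measure M (A n)) \<le> exp (- dt\<^sup>2) ^ n" using mA by auto
    show "norm (exp (- dt\<^sup>2)) < 1" using dt0 by simp
  qed
  have "AE \<omega> in M. eventually (\<lambda>n. \<omega> \<in> space M - A n) sequentially"
    by (rule borel_cantelli_AE1[OF Asets _ summ]) (simp add: less_top[symmetric])
  then show ?thesis
  proof (rule AE_mp, intro AE_I2 impI)
    fix \<omega> assume "\<omega> \<in> space M" and ev: "eventually (\<lambda>n. \<omega> \<in> space M - A n) sequentially"
    show "eventually (\<lambda>n. p * S n \<omega> < p * (real n * dt * c)) sequentially"
      using ev by eventually_elim (auto simp: A_def not_le)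
  qed
qed

end

lemma pow4_3: fixes a b c :: real shows "(a+b+c)^4 \<le> 27*(a^4+b^4+c^4)"
proof -
  have e1: "3*(a^2+b^2+c^2) - (a+b+c)^2 = (a-b)^2+(b-c)^2+(a-c)^2"
    by (simp add: power2_eq_square algebra_simps)
  have 1: "(a+b+c)^2 \<le> 3*(a^2+b^2+c^2)"
    using e1 zero_le_square[of "a-b"] zero_le_square[of "b-c"] zero_le_square[of "a-c"]
    unfolding power2_eq_square[symmetric] by linarith
  have "(a+b+c)^4 = ((a+b+c)^2)^2" by simp
  also have "\<dots> \<le> (3*(a^2+b^2+c^2))^2"
    using 1 by (intro power_mono) auto
  also have "\<dots> \<le> 27*(a^4+b^4+c^4)"
  proof -
    have e2: "3*(a^4+b^4+c^4) - (a^2+b^2+c^2)^2 = (a^2-b^2)^2+(b^2-c^2)^2+(a^2-c^2)^2"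
      by (simp add: power2_eq_square power4_eq_xxxx algebra_simps)
    have h: "(a^2+b^2+c^2)^2 \<le> 3*(a^4+b^4+c^4)"
      using e2 zero_le_square[of "a^2-b^2"] zero_le_square[of "b^2-c^2"] zero_le_square[of "a^2-c^2"]
      unfolding power2_eq_square[symmetric] by linarith
    have "(3*(a^2+b^2+c^2))^2 = 9*(a^2+b^2+c^2)^2" by (simp only: power_mult_distrib) simp
    with h show ?thesis by linarith
  qed
  finally show ?thesis .
qed

lemma pow4_2: fixes a b :: real shows "(a-b)^4 \<le> 8*(a^4+b^4)"
proof -
  have e1: "2*(a^2+b^2) - (a-b)^2 = (a+b)^2"
    by (simp add: power2_eq_square algebra_simps)
  have 1: "(a-b)^2 \<le> 2*(a^2+b^2)"
    using e1 zero_le_square[of "a+b"] unfolding power2_eq_square[symmetric] by linarith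
  have "(a-b)^4 = ((a-b)^2)^2" by simp
  also have "\<dots> \<le> (2*(a^2+b^2))^2"
    using 1 by (intro power_mono) auto
  also have "\<dots> \<le> 8*(a^4+b^4)"
  proof -
    have e2: "2*(a^4+b^4) - (a^2+b^2)^2 = (a^2-b^2)^2"
      by (simp add: power2_eq_square power4_eq_xxxx algebra_simps)
    have h: "(a^2+b^2)^2 \<le> 2*(a^4+b^4)"
      using e2 zero_le_square[of "a^2-b^2"] unfolding power2_eq_square[symmetric] by linarith
    have "(2*(a^2+b^2))^2 = 4*(a^2+b^2)^2" by (simp only: power_mult_distrib) simp
    with h show ?thesis by linarith
  qed
  finally show ?thesis .
qed
lemma cube_bound: fixes u r :: real assumes "r > 0" shows "\<bar>u\<bar>^3 \<le> (r*u^2 + u^4/r)/2"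
proof -
  have "0 \<le> (r*\<bar>u\<bar> - u^2)^2" by simp
  then have "2*r*\<bar>u\<bar>^3 \<le> r^2*u^2 + u^4"
    by (simp add: power2_eq_square power3_eq_cube power4_eq_xxxx algebra_simps)
  then have "\<bar>u\<bar>^3 \<le> (r^2*u^2 + u^4) / (2*r)" using assms by (simp add: field_simps)
  also have "(r^2*u^2 + u^4) / (2*r) = (r*u^2 + u^4/r)/2" using assms by (simp add: field_simps power2_eq_square)
  finally show ?thesis .
qed

locale milsetup2 = milsetup +
  assumes small: "(\<bar>lam\<bar> + sig\<^sup>2) * dt \<le> 1/4"
begin

lemma g_ge: "g y \<ge> 1/4"
proof -
  have "\<bar>lam\<bar> * dt + sig\<^sup>2 * dt \<le> 1/4" using small by (simp add: algebra_simps)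
  moreover have "- lam * dt \<le> \<bar>lam\<bar> * dt" using dt0 by (intro mult_right_mono) auto
  moreover have "0 \<le> sig\<^sup>2 * dt" using dt0 by simp
  ultimately have "1/2 + lam*dt - sig\<^sup>2*dt/2 \<ge> 1/4" by linarith
  moreover have "(sig * y + 1)\<^sup>2 / 2 \<ge> 0" by simp
  ultimately show ?thesis unfolding g_sq_form by linarith
qed

lemma pointwise:
  fixes p y :: real
  assumes p: "\<bar>p\<bar> \<le> 1"
  shows "exp (p * ln (g y)) \<le> 1 + p*(g y - 1) + (p*(p-1)/2 + 128*\<bar>p\<bar>* sqrt dt)*(g y - 1)^2
      + 128*\<bar>p\<bar>*27/sqrt dt * (lam^4*dt^4 + sig^4*y^4 + sig^8/2*y^8 + sig^8/2*dt^4)"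
proof -
  define u where "u = g y - 1"
  define r where "r = sqrt dt"
  have r0: "r > 0" unfolding r_def using dt0 by simp
  have T: "exp (p * ln (g y)) \<le> 1 + p*u + p*(p-1)/2*u^2 + 256*\<bar>p\<bar>*\<bar>u\<bar>^3"
    using exp_ln_taylor[OF g_ge p] unfolding u_def by simp
  have u4: "u^4 \<le> 27*(lam^4*dt^4 + sig^4*y^4 + sig^8/2*y^8 + sig^8/2*dt^4)"
  proof -
    have "u = lam*dt + sig*y + sig\<^sup>2/2*(y^2 - dt)" unfolding u_def g_def by simp
    then have a: "u^4 \<le> 27*((lam*dt)^4 + (sig*y)^4 + (sig\<^sup>2/2*(y^2 - dt))^4)"
      using pow4_3 by simp
    have b: "(sig\<^sup>2/2*(y^2 - dt))^4 = (sig\<^sup>2)^4/2^4 * (y^2-dt)^4"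
      by (simp add: power_mult_distrib power_divide)
    have c: "(y^2-dt)^4 \<le> 8*((y^2)^4 + dt^4)" by (rule pow4_2)
    have d: "(sig\<^sup>2)^4 = sig^8" "(y^2)^4 = y^8" "(lam*dt)^4 = lam^4*dt^4" "(sig*y)^4 = sig^4*y^4"
      by (simp_all add: power_mult[symmetric] power_mult_distrib)
    have "sig^8/2^4 * (y^2-dt)^4 \<le> sig^8/2^4 * (8*(y^8 + dt^4))"
      using c d by (intro mult_left_mono) auto
    then show ?thesis using a b d by (simp add: algebra_simps)
  qed
  have "256*\<bar>p\<bar>*\<bar>u\<bar>^3 \<le> 256*\<bar>p\<bar>*((r*u^2 + u^4/r)/2)"
    by (intro mult_left_mono cube_bound r0) auto
  also have "\<dots> = 128*\<bar>p\<bar>*r*u^2 + 128*\<bar>p\<bar>/r * u^4" by (simp add: field_simps)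
  also have "\<dots> \<le> 128*\<bar>p\<bar>*r*u^2 + 128*\<bar>p\<bar>/r * (27*(lam^4*dt^4 + sig^4*y^4 + sig^8/2*y^8 + sig^8/2*dt^4))"
    using r0 by (intro add_left_mono mult_left_mono u4) auto
  also have "128*\<bar>p\<bar>/r * (27*(lam^4*dt^4 + sig^4*y^4 + sig^8/2*y^8 + sig^8/2*dt^4))
     = 128*\<bar>p\<bar>*27/r * (lam^4*dt^4 + sig^4*y^4 + sig^8/2*y^8 + sig^8/2*dt^4)" by simp
  finally have U: "256*\<bar>p\<bar>*\<bar>u\<bar>^3 \<le> 128*\<bar>p\<bar>*r*u^2 + 128*\<bar>p\<bar>*27/r * (lam^4*dt^4 + sig^4*y^4 + sig^8/2*y^8 + sig^8/2*dt^4)" .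
  have D: "(p*(p-1)/2 + 128*\<bar>p\<bar>*r)*u^2 = p*(p-1)/2*u^2 + 128*\<bar>p\<bar>*r*u^2"
    by (simp add: distrib_right)
  show ?thesis unfolding u_def[symmetric] r_def[symmetric] using T U D by linarith
qed

end

definition VV :: "real \<Rightarrow> real \<Rightarrow> real" where "VV lam sig = lam^2 + sig^2 + sig^4"
definition WW :: "real \<Rightarrow> real \<Rightarrow> real" where "WW lam sig = 27*(lam^4 + 3* sig^4 + 53* sig^8)"
definition CC :: "real \<Rightarrow> real \<Rightarrow> real" where "CC lam sig = sig^2/2 + VV lam sig + 128*(VV lam sig + WW lam sig)"

lemma num_common:
  fixes r lam sig v :: real
  assumes r: "0 < r" "r < 1"
  assumes v_def: "v = lam^2*(r^2)^2 + sig^2*r^2 + sig^4*(r^2)^2/2"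
  shows "sig^2*r^2 \<le> v" "v \<le> VV lam sig * r^2"
    "3456*(lam^4*(r^2)^4 + 3* sig^4*(r^2)^2 + 53* sig^8*(r^2)^4) \<le> 128*(WW lam sig*r^4)"
proof -
  have r4: "r^4 \<le> r^2" using r by (intro power_decreasing) auto
  have r8: "r^8 \<le> r^4" using r by (intro power_decreasing) auto
  have p1: "(r^2)^2 = r^4" "(r^2)^4 = r^8" by (simp_all add: power_mult[symmetric])
  show "sig^2*r^2 \<le> v" unfolding v_def by simp
  have m: "lam^2*r^4 \<le> lam^2*r^2" "sig^4*r^4 \<le> sig^4*r^2" using r4 by (intro mult_left_mono; simp)+
  have n: "0 \<le> sig^4*r^4" by simp
  have "VV lam sig * r^2 = lam^2*r^2 + sig^2*r^2 + sig^4*r^2" by (simp add: VV_def algebra_simps)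
  moreover have "v = lam^2*r^4 + sig^2*r^2 + sig^4*r^4/2" by (simp add: v_def p1)
  ultimately show "v \<le> VV lam sig * r^2" using m n by linarith
  have "lam^4*r^8 \<le> lam^4*r^4" "sig^8*r^8 \<le> sig^8*r^4" using r8 by (intro mult_left_mono; simp)+
  then show "3456*(lam^4*(r^2)^4 + 3* sig^4*(r^2)^2 + 53* sig^8*(r^2)^4) \<le> 128*(WW lam sig*r^4)"
    unfolding WW_def p1 by (simp add: algebra_simps)
qed

lemma num_pos:
  fixes r lam sig v :: real
  assumes r: "0 < r" "r < 1"
  assumes v_def: "v = lam^2*(r^2)^2 + sig^2*r^2 + sig^4*(r^2)^2/2"
  shows "1 + r*lam*r^2 + (r*(r-1)/2 + 128*r*r)* v + 3456*(lam^4*(r^2)^4 + 3* sig^4*(r^2)^2 + 53* sig^8*(r^2)^4)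
     \<le> 1 + r^3*(lam - sig^2/2 + CC lam sig * r)"
proof -
  note c = num_common[OF r v_def]
  have a: "(r*(r-1)/2)* v \<le> (r*(r-1)/2)*(sig^2*r^2)"
    using c(1) r by (intro mult_left_mono_neg) (auto simp: mult_nonneg_nonpos)
  have b: "(128*r*r)* v \<le> (128*r*r)*(VV lam sig * r^2)"
    using c(2) by (intro mult_left_mono) auto
  have V0: "VV lam sig \<ge> 0" unfolding VV_def by simp
  have "VV lam sig * r^4 \<ge> 0" using V0 by simp
  have e1: "(r*(r-1)/2)*(sig^2*r^2) = sig^2/2*r^4 - r^3* sig^2/2" by algebra
  have e2: "(128*r*r)*(VV lam sig * r^2) = 128*(VV lam sig*r^4)" by (simp add: power2_eq_square power4_eq_xxxx algebra_simps)
  have e3: "r^3*(lam - sig^2/2 + CC lam sig * r) = r^3*lam - r^3* sig^2/2 + sig^2/2*r^4 + VV lam sig*r^4 + 128*(VV lam sig*r^4) + 128*(WW lam sig*r^4)"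
    unfolding CC_def by (simp add: power3_eq_cube power4_eq_xxxx algebra_simps)
  have e4: "r*lam*r^2 = r^3*lam" by (simp add: power2_eq_square power3_eq_cube)
  have e5: "(r*(r-1)/2 + 128*r*r)* v = (r*(r-1)/2)* v + (128*r*r)* v" by (simp add: distrib_right)
  have "(r*(r-1)/2)* v + (128*r*r)* v + 3456*(lam^4*(r^2)^4 + 3* sig^4*(r^2)^2 + 53* sig^8*(r^2)^4)
      \<le> (sig^2/2*r^4 - r^3* sig^2/2) + 128*(VV lam sig*r^4) + 128*(WW lam sig*r^4)"
    using a b c(3) unfolding e1 e2 by linarith
  then show ?thesis unfolding e3 e4 e5 using \<open>VV lam sig * r^4 \<ge> 0\<close> by linarith
qed

lemma num_neg:
  fixes r lam sig v :: real
  assumes r: "0 < r" "r < 1"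
  assumes v_def: "v = lam^2*(r^2)^2 + sig^2*r^2 + sig^4*(r^2)^2/2"
  shows "1 + (-r)*lam*r^2 + ((-r)*(-r-1)/2 + 128*r*r)* v + 3456*(lam^4*(r^2)^4 + 3* sig^4*(r^2)^2 + 53* sig^8*(r^2)^4)
     \<le> 1 + r^3*(-(lam - sig^2/2) + CC lam sig * r)"
proof -
  note c = num_common[OF r v_def]
  have V0: "VV lam sig \<ge> 0" unfolding VV_def by simp
  have vs: "v = sig^2*r^2 + (lam^2 + sig^4/2)*r^4"
    unfolding v_def by (simp add: power_mult[symmetric] algebra_simps)
  have rr: "r + r*r \<le> 2" using r by (smt (verit) mult_left_le_one_le)
  have q: "0 \<le> r*(r+1)/2" "r*(r+1)/2 \<le> 1" using r rr by (auto simp: field_simps)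
  have "(r*(r+1)/2)*((lam^2 + sig^4/2)*r^4) \<le> 1 * (VV lam sig * r^4)"
  proof (rule mult_mono)
    show "(lam^2 + sig^4/2)*r^4 \<le> VV lam sig * r^4" unfolding VV_def
      by (intro mult_right_mono) auto
  qed (use q V0 in auto)
  moreover have "(r*(r+1)/2)*(sig^2*r^2) = r^3* sig^2/2 + sig^2/2*r^4"
    by algebra
  ultimately have a: "(r*(r+1)/2)* v \<le> r^3* sig^2/2 + sig^2/2*r^4 + VV lam sig * r^4"
    unfolding vs distrib_left by linarith
  have b: "(128*r*r)* v \<le> (128*r*r)*(VV lam sig * r^2)"
    using c(2) by (intro mult_left_mono) auto
  have e2: "(128*r*r)*(VV lam sig * r^2) = 128*(VV lam sig*r^4)" by (simp add: power2_eq_square power4_eq_xxxx algebra_simps)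
  have e3: "r^3*(-(lam - sig^2/2) + CC lam sig * r) = r^3* sig^2/2 - r^3*lam + sig^2/2*r^4 + VV lam sig*r^4 + 128*(VV lam sig*r^4) + 128*(WW lam sig*r^4)"
    unfolding CC_def by (simp add: power3_eq_cube power4_eq_xxxx algebra_simps)
  have e4: "(-r)*lam*r^2 = -(r^3*lam)" by (simp add: power2_eq_square power3_eq_cube)
  have e5: "((-r)*(-r-1)/2 + 128*r*r)* v = (r*(r+1)/2)* v + (128*r*r)* v" by (simp add: algebra_simps)
  have "VV lam sig * r^4 \<ge> 0" using V0 by simp
  have "(r*(r+1)/2)* v + (128*r*r)* v + 3456*(lam^4*(r^2)^4 + 3* sig^4*(r^2)^2 + 53* sig^8*(r^2)^4)
      \<le> (r^3* sig^2/2 + sig^2/2*r^4 + VV lam sig * r^4) + 128*(VV lam sig*r^4) + 128*(WW lam sig*r^4)"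
    using a b c(3) unfolding e2 by linarith
  then show ?thesis unfolding e3 e4 e5 using \<open>VV lam sig * r^4 \<ge> 0\<close> by linarith
qed

context milsetup2 begin

lemma hb_const: "has_bochner_integral M (\<lambda>_. c) (c::real)"
  using has_bochner_integral_mult_right[OF mom0[of 0], of c] by simp

lemma gm1: "g y - 1 = (lam*dt - sig\<^sup>2*dt/2) + sig * y + (sig\<^sup>2/2) * y\<^sup>2"
  unfolding g_def power2_eq_square by (simp add: field_simps)

definition vv :: real where "vv = lam^2*dt^2 + sig^2*dt + sig^4*dt^2/2"

lemma hb1: "has_bochner_integral M (\<lambda>\<omega>. g (Y i \<omega>) - 1) (lam*dt)"
proof -
  have "has_bochner_integral M (\<lambda>\<omega>. (lam*dt - sig\<^sup>2*dt/2) + sig * Y i \<omega> + (sig\<^sup>2/2) * Y i \<omega>^2)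
     ((lam*dt - sig\<^sup>2*dt/2) + (sig\<^sup>2/2) * dt)" by (rule quad1)
  then show ?thesis unfolding gm1 by (simp add: algebra_simps)
qed

lemma hb2: "has_bochner_integral M (\<lambda>\<omega>. (g (Y i \<omega>) - 1)^2) vv"
proof -
  have "has_bochner_integral M (\<lambda>\<omega>. ((lam*dt - sig\<^sup>2*dt/2) + sig * Y i \<omega> + (sig\<^sup>2/2) * Y i \<omega>^2)^2)
     ((lam*dt - sig\<^sup>2*dt/2)^2 + (sig^2 + 2*(lam*dt - sig\<^sup>2*dt/2)*(sig\<^sup>2/2)) * dt + 3 * (sig\<^sup>2/2)^2 * dt^2)"
    by (rule quad2)
  moreover have "(lam*dt - sig\<^sup>2*dt/2)^2 + (sig^2 + 2*(lam*dt - sig\<^sup>2*dt/2)*(sig\<^sup>2/2)) * dt + 3 * (sig\<^sup>2/2)^2 * dt^2 = vv"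
    unfolding vv_def by (simp add: power2_eq_square power4_eq_xxxx field_simps)
  ultimately show ?thesis unfolding gm1 by simp
qed

lemma Ebound:
  fixes p :: real
  assumes p: "\<bar>p\<bar> = sqrt dt"
  shows "integrable M (\<lambda>\<omega>. exp (p * ln (g (Y i \<omega>))))"
    and "(\<integral>\<omega>. exp (p * ln (g (Y i \<omega>))) \<partial>M) \<le> 1 + p*(lam*dt) + (p*(p-1)/2 + 128*\<bar>p\<bar>* sqrt dt) * vv
           + 3456*(lam^4*dt^4 + 3* sig^4*dt^2 + 53* sig^8*dt^4)"
proof -
  have r0: "sqrt dt > 0" using dt0 by simp
  have p1: "\<bar>p\<bar> \<le> 1" using p dt1 dt0 by simp
  define K where "K = 128*\<bar>p\<bar>*27/sqrt dt"
  have K: "K = 3456" unfolding K_def p using r0 by simp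
  define Q where "Q y = 1 + p*(g y - 1) + (p*(p-1)/2 + 128*\<bar>p\<bar>* sqrt dt)*(g y - 1)^2
      + K * (lam^4*dt^4 + sig^4*y^4 + sig^8/2*y^8 + sig^8/2*dt^4)" for y
  have Qb: "exp (p * ln (g y)) \<le> Q y" for y
    using pointwise[OF p1, of y] unfolding Q_def K_def by simp
  have hbQ: "has_bochner_integral M (\<lambda>\<omega>. Q (Y i \<omega>))
     (1 + p*(lam*dt) + (p*(p-1)/2 + 128*\<bar>p\<bar>* sqrt dt) * vv + K*(lam^4*dt^4 + sig^4*(3*dt^2) + sig^8/2*(105*dt^4) + sig^8/2*dt^4))"
    unfolding Q_def
    by (intro has_bochner_integral_add has_bochner_integral_mult_right hb_const hb1 hb2 mom4 mom8)
  have "K*(lam^4*dt^4 + sig^4*(3*dt^2) + sig^8/2*(105*dt^4) + sig^8/2*dt^4) = 3456*(lam^4*dt^4 + 3* sig^4*dt^2 + 53* sig^8*dt^4)"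
    unfolding K by (simp add: algebra_simps)
  note hbQ = hbQ[unfolded this]
  show int: "integrable M (\<lambda>\<omega>. exp (p * ln (g (Y i \<omega>))))"
  proof (rule Bochner_Integration.integrable_bound[OF integrable.intros[OF hbQ]])
    show "(\<lambda>\<omega>. exp (p * ln (g (Y i \<omega>)))) \<in> borel_measurable M" by measurable
    show "AE \<omega> in M. norm (exp (p * ln (g (Y i \<omega>)))) \<le> norm (Q (Y i \<omega>))"
      using Qb by (intro AE_I2) (smt (verit) exp_gt_zero real_norm_def)
  qed
  have "(\<integral>\<omega>. exp (p * ln (g (Y i \<omega>))) \<partial>M) \<le> (\<integral>\<omega>. Q (Y i \<omega>) \<partial>M)"
    by (intro integral_mono int integrable.intros[OF hbQ] Qb)
  also have "\<dots> = 1 + p*(lam*dt) + (p*(p-1)/2 + 128*\<bar>p\<bar>* sqrt dt) * vv + 3456*(lam^4*dt^4 + 3* sig^4*dt^2 + 53* sig^8*dt^4)"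
    using hbQ by (simp add: has_bochner_integral_iff)
  finally show "(\<integral>\<omega>. exp (p * ln (g (Y i \<omega>))) \<partial>M) \<le> 1 + p*(lam*dt) + (p*(p-1)/2 + 128*\<bar>p\<bar>* sqrt dt) * vv
           + 3456*(lam^4*dt^4 + 3* sig^4*dt^2 + 53* sig^8*dt^4)" .
qed

end

context milsetup2 begin

lemma AE_S:
  "AE \<omega> in M. eventually (\<lambda>n. S n \<omega> < real n * dt * (lam - sig^2/2 + (CC lam sig + 1) * sqrt dt)) sequentially
      \<and> eventually (\<lambda>n. real n * dt * (lam - sig^2/2 - (CC lam sig + 1) * sqrt dt) < S n \<omega>) sequentially"
proof -
  define r where "r = sqrt dt"
  have r0: "0 < r" "r < 1" unfolding r_def using dt0 dt1 by auto
  have dtr: "dt = r^2" unfolding r_def using dt0 by simp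
  define cp where "cp = lam - sig^2/2 + (CC lam sig + 1) * r"
  define cm where "cm = lam - sig^2/2 - (CC lam sig + 1) * r"
  define v where "v = lam^2*(r^2)^2 + sig^2*r^2 + sig^4*(r^2)^2/2"
  have vv: "vv = v" unfolding vv_def v_def by (simp add: dtr)
  have up: "AE \<omega> in M. eventually (\<lambda>n. r * S n \<omega> < r * (real n * dt * cp)) sequentially"
  proof (rule chernoff)
    fix i
    have pr: "\<bar>r\<bar> = sqrt dt" using r0 unfolding r_def by simp
    show "integrable M (\<lambda>\<omega>. exp (r * ln (g (Y i \<omega>))))" by (rule Ebound(1)[OF pr])
    have "(\<integral>\<omega>. exp (r * ln (g (Y i \<omega>))) \<partial>M) \<le> 1 + r*(lam*dt) + (r*(r-1)/2 + 128*\<bar>r\<bar>* sqrt dt) * vv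
           + 3456*(lam^4*dt^4 + 3* sig^4*dt^2 + 53* sig^8*dt^4)" by (rule Ebound(2)[OF pr])
    also have "\<dots> = 1 + r*lam*r^2 + (r*(r-1)/2 + 128*r*r) * v + 3456*(lam^4*(r^2)^4 + 3* sig^4*(r^2)^2 + 53* sig^8*(r^2)^4)"
      unfolding vv using r0 by (simp add: r_def[symmetric] dtr)
    also have "\<dots> \<le> 1 + r^3*(lam - sig^2/2 + CC lam sig * r)"
      by (rule num_pos[OF r0 v_def])
    also have "\<dots> \<le> exp (r^3*(lam - sig^2/2 + CC lam sig * r))" by (rule exp_ge_add_one_self)
    also have "r^3*(lam - sig^2/2 + CC lam sig * r) = r * dt * cp - dt\<^sup>2"
      unfolding cp_def dtr by (simp add: power2_eq_square power3_eq_cube algebra_simps)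
    finally show "(\<integral>\<omega>. exp (r * ln (g (Y i \<omega>))) \<partial>M) \<le> exp (r * dt * cp - dt\<^sup>2)" .
  qed
  have lo: "AE \<omega> in M. eventually (\<lambda>n. (-r) * S n \<omega> < (-r) * (real n * dt * cm)) sequentially"
  proof (rule chernoff)
    fix i
    have pr: "\<bar>-r\<bar> = sqrt dt" using r0 unfolding r_def by simp
    show "integrable M (\<lambda>\<omega>. exp ((-r) * ln (g (Y i \<omega>))))" by (rule Ebound(1)[OF pr])
    have "(\<integral>\<omega>. exp ((-r) * ln (g (Y i \<omega>))) \<partial>M) \<le> 1 + (-r)*(lam*dt) + ((-r)*((-r)-1)/2 + 128*\<bar>-r\<bar>* sqrt dt) * vv
           + 3456*(lam^4*dt^4 + 3* sig^4*dt^2 + 53* sig^8*dt^4)" by (rule Ebound(2)[OF pr])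
    also have "\<dots> = 1 + (-r)*lam*r^2 + ((-r)*(-r-1)/2 + 128*r*r) * v + 3456*(lam^4*(r^2)^4 + 3* sig^4*(r^2)^2 + 53* sig^8*(r^2)^4)"
      unfolding vv using r0 by (simp add: r_def[symmetric] dtr)
    also have "\<dots> \<le> 1 + r^3*(-(lam - sig^2/2) + CC lam sig * r)"
      by (rule num_neg[OF r0 v_def])
    also have "\<dots> \<le> exp (r^3*(-(lam - sig^2/2) + CC lam sig * r))" by (rule exp_ge_add_one_self)
    also have "r^3*(-(lam - sig^2/2) + CC lam sig * r) = (-r) * dt * cm - dt\<^sup>2"
      unfolding cm_def dtr by (simp add: power2_eq_square power3_eq_cube algebra_simps)
    finally show "(\<integral>\<omega>. exp ((-r) * ln (g (Y i \<omega>))) \<partial>M) \<le> exp ((-r) * dt * cm - dt\<^sup>2)" .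
  qed
  show ?thesis
    using up lo
  proof (eventually_elim)
    case (elim \<omega>)
    then show ?case unfolding cp_def[symmetric] cm_def[symmetric] r_def[symmetric]
      using r0 by (auto elim!: eventually_mono simp: mult_less_cancel_left_pos)
  qed
qed

end

definition C3c :: "real \<Rightarrow> real \<Rightarrow> real" where
  "C3c lam sig = lam^2 + sig^4 + (2*\<bar>lam\<bar> + sig^2 + lam^2 + sig^4)^2 + 1"

lemma inv_lim: "(\<lambda>n. c / (real n * dt)) \<longlonglongrightarrow> (0::real)"
proof -
  have "(\<lambda>n. (c/dt) * inverse (real n)) \<longlonglongrightarrow> (c/dt) * 0"
    by (intro tendsto_intros lim_inverse_n)
  moreover have "(\<lambda>n. (c/dt) * inverse (real n)) = (\<lambda>n. c / (real n * dt))"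
    by (rule ext) (simp add: divide_inverse mult_ac)
  ultimately show ?thesis by simp
qed

context milsetup2 begin

lemma mval_ge: "mval \<ge> 1/2"
proof -
  have "\<bar>lam\<bar> * dt \<le> 1/4" using small dt0 by (smt (verit) mult_nonneg_nonneg zero_le_power2 distrib_right)
  moreover have "- (\<bar>lam\<bar> * dt) \<le> lam * dt" using dt0 by (smt (verit) abs_ge_minus_self mult_right_mono mult_minus_left)
  ultimately have a: "3/4 \<le> 1 + lam*dt" by linarith
  have "(3/4)^2 \<le> (1 + lam*dt)^2" using a by (intro power_mono) auto
  moreover have "0 \<le> sig\<^sup>2*dt + sig^4*dt\<^sup>2/2" using dt0 by simp
  ultimately show ?thesis unfolding mval_def by (simp add: power2_eq_square)
qed

definition ell :: real where "ell = ln mval / (2*dt)"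

lemma ell_bounds: "\<bar>ell - (lam + sig^2/2)\<bar> \<le> C3c lam sig * dt"
proof -
  define w where "w = (2*lam + sig^2)*dt + (lam^2 + sig^4/2)*dt^2"
  have mw: "mval = 1 + w" unfolding mval_def w_def by (simp add: power2_eq_square power4_eq_xxxx algebra_simps)
  have mpos: "mval > 0" using mval_ge by simp
  define Wm where "Wm = 2*\<bar>lam\<bar> + sig^2 + lam^2 + sig^4"
  have wabs: "\<bar>w\<bar> \<le> Wm * dt"
  proof -
    have "\<bar>w\<bar> \<le> \<bar>2*lam + sig^2\<bar>*dt + (lam^2 + sig^4/2)*dt^2"
    proof -
      have "\<bar>w\<bar> \<le> \<bar>(2*lam + sig^2)*dt\<bar> + \<bar>(lam^2 + sig^4/2)*dt^2\<bar>" unfolding w_def by (rule abs_triangle_ineq)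
      moreover have "\<bar>(2*lam + sig^2)*dt\<bar> = \<bar>2*lam + sig^2\<bar>*dt" using dt0 by (simp add: abs_mult)
      moreover have "\<bar>(lam^2 + sig^4/2)*dt^2\<bar> = (lam^2 + sig^4/2)*dt^2" by simp
      ultimately show ?thesis by linarith
    qed
    also have "\<dots> \<le> (2*\<bar>lam\<bar> + sig^2)*dt + (lam^2 + sig^4)*dt"
    proof (intro add_mono mult_right_mono)
      show "\<bar>2*lam + sig^2\<bar> \<le> 2*\<bar>lam\<bar> + sig^2" by (smt (verit) abs_triangle_ineq abs_mult zero_le_power2)
      have "dt^2 \<le> dt" using dt0 dt1 by (simp add: power2_eq_square mult_le_cancel_right1) 
      then show "(lam^2 + sig^4/2)*dt^2 \<le> (lam^2 + sig^4)*dt"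
        by (intro mult_mono) auto
    qed (use dt0 in auto)
    finally show ?thesis unfolding Wm_def by (simp add: algebra_simps)
  qed
  have w2: "w^2 \<le> Wm^2 * dt^2"
  proof -
    have "w^2 = \<bar>w\<bar>^2" by simp
    also have "\<dots> \<le> (Wm*dt)^2" using wabs by (intro power_mono) auto
    finally show ?thesis by (simp add: power_mult_distrib)
  qed
  have up: "ln mval \<le> w" using ln_le_minus_one[OF mpos] mw by simp
  have lo: "ln mval \<ge> w - 2*w^2"
  proof -
    have "ln (1/mval) \<le> 1/mval - 1" using mpos by (intro ln_le_minus_one) auto
    then have "ln mval \<ge> 1 - 1/mval" using mpos by (simp add: ln_div)
    moreover have "1 - 1/mval = w - w^2/mval" using mpos mw by (simp add: field_simps power2_eq_square)
    moreover have "w^2/mval \<le> 2*w^2"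
    proof -
      have "w^2/mval \<le> w^2/(1/2)" using mval_ge by (intro divide_left_mono) auto
      then show ?thesis by simp
    qed
    ultimately show ?thesis by linarith
  qed
  have e: "w/(2*dt) = lam + sig^2/2 + (lam^2 + sig^4/2)*dt/2"
    unfolding w_def using dt0 by (simp add: field_simps power2_eq_square)
  have nn: "0 \<le> (lam^2 + sig^4/2)*dt/2" using dt0 by simp
  have u1: "ell \<le> lam + sig^2/2 + (lam^2 + sig^4/2)*dt/2"
    unfolding ell_def e[symmetric] using up dt0 by (intro divide_right_mono) auto
  have l1: "ell \<ge> w/(2*dt) - w^2/dt"
  proof -
    have "(w - 2*w^2)/(2*dt) \<le> ln mval/(2*dt)" using lo dt0 by (intro divide_right_mono) auto
    moreover have "(w - 2*w^2)/(2*dt) = w/(2*dt) - w^2/dt" using dt0 by (simp add: field_simps)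
    ultimately show ?thesis unfolding ell_def by linarith
  qed
  have l2: "w^2/dt \<le> Wm^2*dt"
  proof -
    have "w^2/dt \<le> Wm^2 * dt^2/dt" using w2 dt0 by (intro divide_right_mono) auto
    also have "Wm^2 * dt^2/dt = Wm^2*dt" using dt0 by (simp add: power2_eq_square)
    finally show ?thesis .
  qed
  have l3: "(lam^2 + sig^4/2)*dt/2 \<le> (lam^2+sig^4)*dt"
  proof -
    have "(lam^2 + sig^4/2)/2 \<le> lam^2+sig^4" by simp
    then have "(lam^2 + sig^4/2)/2*dt \<le> (lam^2+sig^4)*dt" using dt0 by (intro mult_right_mono) auto
    then show ?thesis by simp
  qed
  have l4: "C3c lam sig * dt = (lam^2+sig^4)*dt + Wm^2*dt + dt"
    unfolding C3c_def Wm_def by (simp add: algebra_simps)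
  have "Wm^2*dt \<ge> 0" "(lam^2+sig^4)*dt \<ge> 0" using dt0 by auto
  then have A: "ell - (lam + sig^2/2) \<le> C3c lam sig * dt" and B: "-(ell - (lam + sig^2/2)) \<le> C3c lam sig * dt"
    using u1 l1 l2 l3 l4 e dt0 nn by linarith+
  then show ?thesis by (simp only: abs_le_iff)
qed

lemma ms_sqrt: "sqrt (\<integral>\<omega>. \<bar>milstein lam sig x0 B dt n \<omega>\<bar>\<^sup>2 \<partial>M) = \<bar>x0\<bar> * exp (ell * (real n * dt))"
proof -
  have mpos: "mval > 0" using mval_ge by simp
  have se: "sqrt mval = exp (ell * dt)"
  proof -
    have "exp (ell * dt) ^ 2 = exp (ell*dt + ell*dt)" by (simp only: power2_eq_square exp_add)
    also have "ell*dt + ell*dt = ln mval" unfolding ell_def using dt0 by (simp add: field_simps)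
    also have "exp (ln mval) = mval" using mpos by simp
    finally have "sqrt mval = sqrt ((exp (ell * dt))^2)" by simp
    then show ?thesis by simp
  qed
  have "sqrt (x0\<^sup>2 * mval ^ n) = sqrt (x0\<^sup>2) * sqrt (mval ^ n)" by (rule real_sqrt_mult)
  also have "sqrt (x0\<^sup>2) = \<bar>x0\<bar>" by (rule real_sqrt_abs)
  also have "sqrt (mval ^ n) = sqrt mval ^ n" by (rule real_sqrt_power)
  also have "sqrt mval ^ n = exp (ell * (real n * dt))" unfolding se by (simp add: exp_of_nat_mult[symmetric] mult_ac)
  finally show ?thesis unfolding ms_formula .
qed

lemma ms_limsup:
  assumes x0: "x0 \<noteq> 0"
  shows "limsup (\<lambda>n. ereal (ln (sqrt (integral\<^sup>L M (\<lambda>\<omega>. \<bar>milstein lam sig x0 B dt n \<omega>\<bar>\<^sup>2))) / (real n * dt))) = ereal ell"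
proof (rule lim_imp_Limsup[OF trivial_limit_sequentially])
  have ev: "eventually (\<lambda>n. ln \<bar>x0\<bar> / (real n * dt) + ell = ln (sqrt (integral\<^sup>L M (\<lambda>\<omega>. \<bar>milstein lam sig x0 B dt n \<omega>\<bar>\<^sup>2))) / (real n * dt)) sequentially"
    using eventually_gt_at_top[of 0]
  proof eventually_elim
    case (elim n)
    have "ln (\<bar>x0\<bar> * exp (ell * (real n * dt))) = ln \<bar>x0\<bar> + ell * (real n * dt)"
      using x0 by (simp add: ln_mult)
    then show ?case unfolding ms_sqrt using elim dt0 by (simp add: field_simps)
  qed
  have "(\<lambda>n. ln \<bar>x0\<bar> / (real n * dt) + ell) \<longlonglongrightarrow> 0 + ell"
    by (intro tendsto_add inv_lim tendsto_const)
  then have "(\<lambda>n. ln (sqrt (integral\<^sup>L M (\<lambda>\<omega>. \<bar>milstein lam sig x0 B dt n \<omega>\<bar>\<^sup>2))) / (real n * dt)) \<longlonglongrightarrow> ell"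
    using ev by (simp add: tendsto_cong)
  then show "(\<lambda>n. ereal (ln (sqrt (integral\<^sup>L M (\<lambda>\<omega>. \<bar>milstein lam sig x0 B dt n \<omega>\<bar>\<^sup>2))) / (real n * dt))) \<longlonglongrightarrow> ereal ell"
    by simp
qed

end

context milsetup2 begin

lemma g_pos: "g y > 0" using g_ge[of y] by linarith

lemma abs_mil: "\<bar>milstein lam sig x0 B dt n \<omega>\<bar> = \<bar>x0\<bar> * exp (S n \<omega>)"
proof -
  have "exp (S n \<omega>) = (\<Prod>i<n. exp (ln (g (Y i \<omega>))))" unfolding S_def by (simp add: exp_sum)
  also have "\<dots> = (\<Prod>i<n. g (Y i \<omega>))" using g_pos by simp
  finally have e: "exp (S n \<omega>) = (\<Prod>i<n. g (Y i \<omega>))" .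
  have "\<bar>\<Prod>i<n. g (Y i \<omega>)\<bar> = (\<Prod>i<n. g (Y i \<omega>))"
    using g_pos by (intro abs_of_nonneg prod_nonneg) (auto intro: less_imp_le)
  then show ?thesis unfolding milstein_prod e by (simp add: abs_mult)
qed

lemma as_part:
  assumes x0: "x0 \<noteq> 0"
  defines "cp \<equiv> lam - sig^2/2 + (CC lam sig + 1) * sqrt dt"
    and "cm \<equiv> lam - sig^2/2 - (CC lam sig + 1) * sqrt dt"
  shows "AE \<omega> in M.
      ereal (lam - sig\<^sup>2 / 2 - (CC lam sig + 2) * sqrt dt)
           \<le> limsup (\<lambda>n. ereal (ln \<bar>milstein lam sig x0 B dt n \<omega>\<bar> / (real n * dt))) \<and>
      limsup (\<lambda>n. ereal (ln \<bar>milstein lam sig x0 B dt n \<omega>\<bar> / (real n * dt)))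
           \<le> ereal (lam - sig\<^sup>2 / 2 + (CC lam sig + 2) * sqrt dt) \<and>
      eventually (\<lambda>n. \<bar>milstein lam sig x0 B dt n \<omega>\<bar> \<le> \<bar>x0\<bar> * exp (cp * (real n * dt))) sequentially \<and>
      eventually (\<lambda>n. \<bar>x0\<bar> * exp (cm * (real n * dt)) \<le> \<bar>milstein lam sig x0 B dt n \<omega>\<bar>) sequentially"
  using AE_S
proof eventually_elim
  case (elim \<omega>)
  define r where "r = sqrt dt"
  have r0: "r > 0" unfolding r_def using dt0 by simp
  have E1: "eventually (\<lambda>n. S n \<omega> < real n * dt * cp) sequentially"
    using elim unfolding cp_def by simp
  have E2: "eventually (\<lambda>n. real n * dt * cm < S n \<omega>) sequentially"
    using elim unfolding cm_def by simp
  have L: "(\<lambda>n. ln \<bar>x0\<bar> / (real n * dt)) \<longlonglongrightarrow> 0" by (rule inv_lim)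
  have E3: "eventually (\<lambda>n. ln \<bar>x0\<bar> / (real n * dt) < r) sequentially"
    using order_tendstoD(2)[OF L r0] .
  have E4: "eventually (\<lambda>n. -r < ln \<bar>x0\<bar> / (real n * dt)) sequentially"
    using order_tendstoD(1)[OF L] r0 by simp
  have lnX: "ln \<bar>milstein lam sig x0 B dt n \<omega>\<bar> = ln \<bar>x0\<bar> + S n \<omega>" for n
    unfolding abs_mil using x0 by (simp add: ln_mult)
  have up: "eventually (\<lambda>n. ereal (ln \<bar>milstein lam sig x0 B dt n \<omega>\<bar> / (real n * dt))
      \<le> ereal (lam - sig\<^sup>2 / 2 + (CC lam sig + 2) * sqrt dt)) sequentially"
    using E1 E3 eventually_gt_at_top[of 0]
  proof eventually_elim
    case (elim n)
    have nd: "real n * dt > 0" using elim dt0 by simp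
    have "S n \<omega> / (real n * dt) < cp" using elim(1) nd by (simp add: divide_less_eq mult_ac)
    moreover have "ln \<bar>milstein lam sig x0 B dt n \<omega>\<bar> / (real n * dt) = ln \<bar>x0\<bar> / (real n * dt) + S n \<omega> / (real n * dt)"
      unfolding lnX by (simp add: add_divide_distrib)
    ultimately show ?case using elim(2) unfolding cp_def r_def by (simp add: algebra_simps)
  qed
  have lo: "eventually (\<lambda>n. ereal (lam - sig\<^sup>2 / 2 - (CC lam sig + 2) * sqrt dt)
      \<le> ereal (ln \<bar>milstein lam sig x0 B dt n \<omega>\<bar> / (real n * dt))) sequentially"
    using E2 E4 eventually_gt_at_top[of 0]
  proof eventually_elim
    case (elim n)
    have nd: "real n * dt > 0" using elim dt0 by simp
    have "cm < S n \<omega> / (real n * dt)" using elim(1) nd by (simp add: less_divide_eq mult_ac)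
    moreover have "ln \<bar>milstein lam sig x0 B dt n \<omega>\<bar> / (real n * dt) = ln \<bar>x0\<bar> / (real n * dt) + S n \<omega> / (real n * dt)"
      unfolding lnX by (simp add: add_divide_distrib)
    ultimately show ?case using elim(2) unfolding cm_def r_def by (simp add: algebra_simps)
  qed
  have "ereal (lam - sig\<^sup>2 / 2 - (CC lam sig + 2) * sqrt dt)
           \<le> liminf (\<lambda>n. ereal (ln \<bar>milstein lam sig x0 B dt n \<omega>\<bar> / (real n * dt)))"
    by (rule Liminf_bounded[OF lo])
  also have "\<dots> \<le> limsup (\<lambda>n. ereal (ln \<bar>milstein lam sig x0 B dt n \<omega>\<bar> / (real n * dt)))"
    by (rule Liminf_le_Limsup[OF trivial_limit_sequentially])
  finally have A: "ereal (lam - sig\<^sup>2 / 2 - (CC lam sig + 2) * sqrt dt)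
           \<le> limsup (\<lambda>n. ereal (ln \<bar>milstein lam sig x0 B dt n \<omega>\<bar> / (real n * dt)))" .
  have B: "limsup (\<lambda>n. ereal (ln \<bar>milstein lam sig x0 B dt n \<omega>\<bar> / (real n * dt)))
           \<le> ereal (lam - sig\<^sup>2 / 2 + (CC lam sig + 2) * sqrt dt)"
    by (rule Limsup_bounded[OF up])
  have C: "eventually (\<lambda>n. \<bar>milstein lam sig x0 B dt n \<omega>\<bar> \<le> \<bar>x0\<bar> * exp (cp * (real n * dt))) sequentially"
    using E1 by eventually_elim (auto simp: abs_mil mult_ac intro!: mult_left_mono)
  have D: "eventually (\<lambda>n. \<bar>x0\<bar> * exp (cm * (real n * dt)) \<le> \<bar>milstein lam sig x0 B dt n \<omega>\<bar>) sequentially"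
    using E2 by eventually_elim (auto simp: abs_mil mult_ac intro!: mult_left_mono)
  show ?case using A B C D by blast
qed

end

lemma key:
  fixes M :: "'a measure" and B :: "real \<Rightarrow> 'a \<Rightarrow> real" and lam sig x0 dt :: real
  assumes BM: "std_brownian_motion M B" and x0: "x0 \<noteq> 0"
    and dt0: "0 < dt" and dt1: "dt < 1" and small: "(\<bar>lam\<bar> + sig\<^sup>2) * dt \<le> 1/4"
    and a1: "lam + sig\<^sup>2/2 \<noteq> 0 \<Longrightarrow> C3c lam sig * dt < \<bar>lam + sig\<^sup>2/2\<bar>/2"
    and a2: "lam - sig\<^sup>2/2 \<noteq> 0 \<Longrightarrow> (CC lam sig + 2) * sqrt dt < \<bar>lam - sig\<^sup>2/2\<bar>/2"
  shows
      "ereal (lam + sig\<^sup>2 / 2 - C3c lam sig * dt)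
        \<le> limsup (\<lambda>n. ereal (ln (sqrt (integral\<^sup>L M (\<lambda>\<omega>. \<bar>milstein lam sig x0 B dt n \<omega>\<bar>\<^sup>2))) / (real n * dt))) \<and>
      limsup (\<lambda>n. ereal (ln (sqrt (integral\<^sup>L M (\<lambda>\<omega>. \<bar>milstein lam sig x0 B dt n \<omega>\<bar>\<^sup>2))) / (real n * dt)))
        \<le> ereal (lam + sig\<^sup>2 / 2 + C3c lam sig * dt) \<and>
      (AE \<omega> in M.
         ereal (lam - sig\<^sup>2 / 2 - (CC lam sig + 2) * sqrt dt)
           \<le> limsup (\<lambda>n. ereal (ln \<bar>milstein lam sig x0 B dt n \<omega>\<bar> / (real n * dt))) \<and>
         limsup (\<lambda>n. ereal (ln \<bar>milstein lam sig x0 B dt n \<omega>\<bar> / (real n * dt)))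
           \<le> ereal (lam - sig\<^sup>2 / 2 + (CC lam sig + 2) * sqrt dt)) \<and>
      (lam + sig\<^sup>2 / 2 < 0 \<longrightarrow> ms_exp_stable M (milstein lam sig x0 B dt) dt) \<and>
      (lam + sig\<^sup>2 / 2 > 0 \<longrightarrow> ms_exp_blowup M (milstein lam sig x0 B dt) dt) \<and>
      (lam - sig\<^sup>2 / 2 < 0 \<longrightarrow> as_exp_stable M (milstein lam sig x0 B dt) dt) \<and>
      (lam - sig\<^sup>2 / 2 > 0 \<longrightarrow> as_exp_blowup M (milstein lam sig x0 B dt) dt)"
proof -
  interpret milsetup2 M B lam sig dt
    by unfold_locales (use BM dt0 dt1 small in auto)
  have ellb: "\<bar>ell - (lam + sig^2/2)\<bar> \<le> C3c lam sig * dt" by (rule ell_bounds)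
  have lim: "limsup (\<lambda>n. ereal (ln (sqrt (integral\<^sup>L M (\<lambda>\<omega>. \<bar>milstein lam sig x0 B dt n \<omega>\<bar>\<^sup>2))) / (real n * dt))) = ereal ell"
    by (rule ms_limsup[OF x0])
  define cp where "cp = lam - sig^2/2 + (CC lam sig + 1) * sqrt dt"
  define cm where "cm = lam - sig^2/2 - (CC lam sig + 1) * sqrt dt"
  note AS = as_part[OF x0, folded cp_def cm_def]
  have sd: "sqrt dt > 0" using dt0 by simp
  have P1: "ereal (lam + sig\<^sup>2 / 2 - C3c lam sig * dt) \<le> ereal ell"
    using ellb by (simp add: abs_le_iff)
  have P2: "ereal ell \<le> ereal (lam + sig\<^sup>2 / 2 + C3c lam sig * dt)"
    using ellb by (simp add: abs_le_iff)
  have P3: "AE \<omega> in M.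
         ereal (lam - sig\<^sup>2 / 2 - (CC lam sig + 2) * sqrt dt)
           \<le> limsup (\<lambda>n. ereal (ln \<bar>milstein lam sig x0 B dt n \<omega>\<bar> / (real n * dt))) \<and>
         limsup (\<lambda>n. ereal (ln \<bar>milstein lam sig x0 B dt n \<omega>\<bar> / (real n * dt)))
           \<le> ereal (lam - sig\<^sup>2 / 2 + (CC lam sig + 2) * sqrt dt)"
    using AS by eventually_elim blast
  have P4: "ms_exp_stable M (milstein lam sig x0 B dt) dt" if neg: "lam + sig\<^sup>2 / 2 < 0"
  proof -
    have "ell < 0" using a1 neg ellb by (auto simp: abs_le_iff)
    then show ?thesis unfolding ms_exp_stable_def ms_sqrt
      using x0 by (intro exI[of _ "\<bar>x0\<bar>"] exI[of _ "-ell"] conjI) auto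
  qed
  have P5: "ms_exp_blowup M (milstein lam sig x0 B dt) dt" if pos: "lam + sig\<^sup>2 / 2 > 0"
  proof -
    have "ell > 0" using a1 pos ellb by (auto simp: abs_le_iff)
    then show ?thesis unfolding ms_exp_blowup_def ms_sqrt
      using x0 by (intro exI[of _ "\<bar>x0\<bar>"] exI[of _ "ell"] conjI) auto
  qed
  have P6: "as_exp_stable M (milstein lam sig x0 B dt) dt" if neg: "lam - sig\<^sup>2 / 2 < 0"
  proof -
    have "(CC lam sig + 1) * sqrt dt \<le> (CC lam sig + 2) * sqrt dt" using sd by simp
    then have "cp < 0" using a2 neg unfolding cp_def by auto
    then show ?thesis unfolding as_exp_stable_def
    proof (intro exI[of _ "-cp"] conjI)
      show "AE \<omega> in M. \<exists>C>0. \<forall>\<^sub>F n in sequentially. \<bar>milstein lam sig x0 B dt n \<omega>\<bar> \<le> C * exp (- (- cp) * (real n * dt))"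
        using AS
      proof eventually_elim
        case (elim \<omega>) then show ?case using x0 by (intro exI[of _ "\<bar>x0\<bar>"]) auto
      qed
    qed auto
  qed
  have P7: "as_exp_blowup M (milstein lam sig x0 B dt) dt" if pos: "lam - sig\<^sup>2 / 2 > 0"
  proof -
    have "(CC lam sig + 1) * sqrt dt \<le> (CC lam sig + 2) * sqrt dt" using sd by simp
    then have "cm > 0" using a2 pos unfolding cm_def by auto
    then show ?thesis unfolding as_exp_blowup_def
    proof (intro exI[of _ "cm"] conjI)
      show "AE \<omega> in M. \<exists>C>0. \<forall>\<^sub>F n in sequentially. C * exp (cm * (real n * dt)) \<le> \<bar>milstein lam sig x0 B dt n \<omega>\<bar>"
        using AS
      proof eventually_elim
        case (elim \<omega>) then show ?case using x0 by (intro exI[of _ "\<bar>x0\<bar>"]) auto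
      qed
    qed auto
  qed
  show ?thesis unfolding lim using P1 P2 P3 P4 P5 P6 P7 by blast
qed

theorem proposition3p1:
  fixes M :: "'a measure" and B :: "real \<Rightarrow> 'a \<Rightarrow> real" and lam sig x0 :: real
  assumes "std_brownian_motion M B" and "x0 \<noteq> 0"
  shows "\<exists>dt2 C3 C4. 0 < dt2 \<and> dt2 < 1 \<and> C3 > 0 \<and> C4 > 0 \<and>
    (\<forall>dt. 0 < dt \<and> dt < dt2 \<longrightarrow>
      ereal (lam + sig\<^sup>2 / 2 - C3 * dt)
        \<le> limsup (\<lambda>n. ereal (ln (sqrt (integral\<^sup>L M (\<lambda>\<omega>. \<bar>milstein lam sig x0 B dt n \<omega>\<bar>\<^sup>2))) / (real n * dt))) \<and>
      limsup (\<lambda>n. ereal (ln (sqrt (integral\<^sup>L M (\<lambda>\<omega>. \<bar>milstein lam sig x0 B dt n \<omega>\<bar>\<^sup>2))) / (real n * dt)))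
        \<le> ereal (lam + sig\<^sup>2 / 2 + C3 * dt) \<and>
      (AE \<omega> in M.
         ereal (lam - sig\<^sup>2 / 2 - C4 * sqrt dt)
           \<le> limsup (\<lambda>n. ereal (ln \<bar>milstein lam sig x0 B dt n \<omega>\<bar> / (real n * dt))) \<and>
         limsup (\<lambda>n. ereal (ln \<bar>milstein lam sig x0 B dt n \<omega>\<bar> / (real n * dt)))
           \<le> ereal (lam - sig\<^sup>2 / 2 + C4 * sqrt dt)) \<and>
      (lam + sig\<^sup>2 / 2 < 0 \<longrightarrow> ms_exp_stable M (milstein lam sig x0 B dt) dt) \<and>
      (lam + sig\<^sup>2 / 2 > 0 \<longrightarrow> ms_exp_blowup M (milstein lam sig x0 B dt) dt) \<and>
      (lam - sig\<^sup>2 / 2 < 0 \<longrightarrow> as_exp_stable M (milstein lam sig x0 B dt) dt) \<and>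
      (lam - sig\<^sup>2 / 2 > 0 \<longrightarrow> as_exp_blowup M (milstein lam sig x0 B dt) dt))"
proof -
  define C3 where "C3 = C3c lam sig"
  define C4 where "C4 = CC lam sig + 2"
  have C3pos: "C3 > 0" unfolding C3_def C3c_def by (simp add: add_nonneg_pos)
  have CC0: "CC lam sig \<ge> 0" unfolding CC_def VV_def WW_def by simp
  have C4pos: "C4 > 0" unfolding C4_def using CC0 by simp
  define a1 where "a1 = (if lam + sig\<^sup>2/2 = 0 then 1 else \<bar>lam + sig\<^sup>2/2\<bar>/(2*C3))"
  define a2 where "a2 = (if lam - sig\<^sup>2/2 = 0 then 1 else (\<bar>lam - sig\<^sup>2/2\<bar>/(2*C4))^2)"
  define dt2 where "dt2 = min (min (1/2) (1/(4*(\<bar>lam\<bar> + sig\<^sup>2 + 1)))) (min a1 a2)"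
  have a1pos: "a1 > 0" unfolding a1_def using C3pos by auto
  have a2pos: "a2 > 0" unfolding a2_def using C4pos by auto
  have d4: "1/(4*(\<bar>lam\<bar> + sig\<^sup>2 + 1)) > 0" by (simp add: add_nonneg_pos)
  have dt2pos: "0 < dt2" unfolding dt2_def using a1pos a2pos d4 by simp
  have dt21: "dt2 < 1" unfolding dt2_def by simp
  have main: "(\<forall>dt. 0 < dt \<and> dt < dt2 \<longrightarrow>
      ereal (lam + sig\<^sup>2 / 2 - C3 * dt)
        \<le> limsup (\<lambda>n. ereal (ln (sqrt (integral\<^sup>L M (\<lambda>\<omega>. \<bar>milstein lam sig x0 B dt n \<omega>\<bar>\<^sup>2))) / (real n * dt))) \<and>
      limsup (\<lambda>n. ereal (ln (sqrt (integral\<^sup>L M (\<lambda>\<omega>. \<bar>milstein lam sig x0 B dt n \<omega>\<bar>\<^sup>2))) / (real n * dt)))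
        \<le> ereal (lam + sig\<^sup>2 / 2 + C3 * dt) \<and>
      (AE \<omega> in M.
         ereal (lam - sig\<^sup>2 / 2 - C4 * sqrt dt)
           \<le> limsup (\<lambda>n. ereal (ln \<bar>milstein lam sig x0 B dt n \<omega>\<bar> / (real n * dt))) \<and>
         limsup (\<lambda>n. ereal (ln \<bar>milstein lam sig x0 B dt n \<omega>\<bar> / (real n * dt)))
           \<le> ereal (lam - sig\<^sup>2 / 2 + C4 * sqrt dt)) \<and>
      (lam + sig\<^sup>2 / 2 < 0 \<longrightarrow> ms_exp_stable M (milstein lam sig x0 B dt) dt) \<and>
      (lam + sig\<^sup>2 / 2 > 0 \<longrightarrow> ms_exp_blowup M (milstein lam sig x0 B dt) dt) \<and>
      (lam - sig\<^sup>2 / 2 < 0 \<longrightarrow> as_exp_stable M (milstein lam sig x0 B dt) dt) \<and>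
      (lam - sig\<^sup>2 / 2 > 0 \<longrightarrow> as_exp_blowup M (milstein lam sig x0 B dt) dt))"
  proof (intro allI impI)
    fix dt assume dt: "0 < dt \<and> dt < dt2"
    have dt0: "0 < dt" using dt by simp
    have dt1: "dt < 1" using dt unfolding dt2_def by simp
    have "dt < 1/(4*(\<bar>lam\<bar> + sig\<^sup>2 + 1))" using dt unfolding dt2_def by simp
    moreover have Dp: "4*(\<bar>lam\<bar> + sig\<^sup>2 + 1) > 0" by (simp add: add_nonneg_pos)
    ultimately have "dt * (4*(\<bar>lam\<bar> + sig\<^sup>2 + 1)) < 1" using pos_less_divide_eq[OF Dp, of dt 1] by blast
    moreover have "dt * (4*(\<bar>lam\<bar> + sig\<^sup>2 + 1)) = 4*((\<bar>lam\<bar> + sig\<^sup>2) * dt) + 4*dt" by (simp add: algebra_simps)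
    ultimately have small: "(\<bar>lam\<bar> + sig\<^sup>2) * dt \<le> 1/4" using dt0 by linarith
    have A1: "C3c lam sig * dt < \<bar>lam + sig\<^sup>2/2\<bar>/2" if "lam + sig\<^sup>2/2 \<noteq> 0"
    proof -
      have "dt < \<bar>lam + sig\<^sup>2/2\<bar>/(2*C3)" using dt that unfolding dt2_def a1_def by simp
      then show ?thesis using C3pos unfolding C3_def by (simp add: field_simps)
    qed
    have A2: "(CC lam sig + 2) * sqrt dt < \<bar>lam - sig\<^sup>2/2\<bar>/2" if "lam - sig\<^sup>2/2 \<noteq> 0"
    proof -
      have "dt < (\<bar>lam - sig\<^sup>2/2\<bar>/(2*C4))^2" using dt that unfolding dt2_def a2_def by simp
      then have "sqrt dt < sqrt ((\<bar>lam - sig\<^sup>2/2\<bar>/(2*C4))^2)" by (rule real_sqrt_less_mono)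
      also have "\<dots> = \<bar>lam - sig\<^sup>2/2\<bar>/(2*C4)" using C4pos by simp
      finally show ?thesis using C4pos unfolding C4_def by (simp add: field_simps)
    qed
    note K = key[OF assms(1) assms(2) dt0 dt1 small A1 A2, folded C3_def C4_def]
    show "ereal (lam + sig\<^sup>2 / 2 - C3 * dt)
        \<le> limsup (\<lambda>n. ereal (ln (sqrt (integral\<^sup>L M (\<lambda>\<omega>. \<bar>milstein lam sig x0 B dt n \<omega>\<bar>\<^sup>2))) / (real n * dt))) \<and>
      limsup (\<lambda>n. ereal (ln (sqrt (integral\<^sup>L M (\<lambda>\<omega>. \<bar>milstein lam sig x0 B dt n \<omega>\<bar>\<^sup>2))) / (real n * dt)))
        \<le> ereal (lam + sig\<^sup>2 / 2 + C3 * dt) \<and>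
      (AE \<omega> in M.
         ereal (lam - sig\<^sup>2 / 2 - C4 * sqrt dt)
           \<le> limsup (\<lambda>n. ereal (ln \<bar>milstein lam sig x0 B dt n \<omega>\<bar> / (real n * dt))) \<and>
         limsup (\<lambda>n. ereal (ln \<bar>milstein lam sig x0 B dt n \<omega>\<bar> / (real n * dt)))
           \<le> ereal (lam - sig\<^sup>2 / 2 + C4 * sqrt dt)) \<and>
      (lam + sig\<^sup>2 / 2 < 0 \<longrightarrow> ms_exp_stable M (milstein lam sig x0 B dt) dt) \<and>
      (lam + sig\<^sup>2 / 2 > 0 \<longrightarrow> ms_exp_blowup M (milstein lam sig x0 B dt) dt) \<and>
      (lam - sig\<^sup>2 / 2 < 0 \<longrightarrow> as_exp_stable M (milstein lam sig x0 B dt) dt) \<and>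
      (lam - sig\<^sup>2 / 2 > 0 \<longrightarrow> as_exp_blowup M (milstein lam sig x0 B dt) dt)"
      by (rule K)
  qed
  show ?thesis using dt2pos dt21 C3pos C4pos main by blast
qed


end
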